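(* Let $(\mathcal{V},\mathcal{B})$ be a Steiner triple system (a $(2,3,V)$-Steiner system) in which every point lies in exactly $R$ blocks, with embedding operators $\{\mathbf{E}_v\}_{v\in\mathcal{V}}$. Let $\{\varphi_s\}_{s=1}^{R+1}$ be a unimodular simplex in $\mathbb{C}^R$ with Naimark complement $\{a_s\}_{s=1}^{R+1}\subset\mathbb{C}$, and let $\{\psi_t\}_{t=1}^{V+1}$ be a unimodular simplex in $\mathbb{C}^\mathcal{V}$ with Naimark complement $\{b_t\}_{t=1}^{V+1}\subset\mathbb{C}$. Then the ensemble \[ \Big\{\mathbf{E}_v\varphi_s\oplus\sqrt{2}\,a_s\delta_v\oplus 0\Big\}_{s\in[R+1],\ v\in\mathcal{V}} \cup\Big\{0_\mathcal{B}\oplus\sqrt{\tfrac{1}{2}}\,\psi_t\oplus\sqrt{\tfrac{3}{2}}\,b_t\Big\}_{t=1}^{V+1} \] forms an equiangular tight frame in $\mathbb{C}^\mathcal{B}\oplus\mathbb{C}^\mathcal{V}\oplus\mathbb{C}$.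
   Context: A $(2,K,V)$-Steiner system is a set $\mathcal{V}$ of $V$ points with a collection $\mathcal{B}$ of $K$-element subsets (blocks) such that every 2-element subset of $\mathcal{V}$ lies in exactly one block; each point then lies in the same number $R$ of blocks. For a finite set $\mathcal{S}$, $\{\delta_s\}_{s\in\mathcal{S}}$ is the standard orthonormal basis of $\mathbb{C}^\mathcal{S}$. For $v\in\mathcal{V}$, an embedding operator $\mathbf{E}_v\colon\mathbb{C}^R\to\mathbb{C}^\mathcal{B}$ is a linear map sending $\{\delta_r\}_{r=1}^R$ bijectively onto $\{\delta_b: b\in\mathcal{B}, v\in b\}$. A complex Hadamard matrix of size $n$ is an $n\times n$ matrix $\mathbf{H}$ with entries of modulus 1 and $\mathbf{H}\mathbf{H}^*=n\mathbf{I}$. A unimodular simplex in $\mathbb{C}^{n-1}$ is the sequence of $n$ columns of the matrix obtained by deleting one row of an $n\times n$ complex Hadamard matrix; the entries of the deleted row, indexed by column, form its Naimark complement. An equiangular tight frame (ETF) in a finite-dimensional Hilbert space $\mathcal{H}$ is a finite sequence $\{\phi_i\}_{i=1}^N$ of nonzero vectors of equal norm such that $|\langle\phi_i,\phi_j\rangle|$ is the same for all $i\neq j$ and the frame operator $x\mapsto\sum_i\langle x,\phi_i\rangle\phi_i$ is a scalar multiple of the identity on $\mathcal{H}$. *)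

theory Defs
  imports Complex_Main
begin

text \<open>Vectors in \<open>\<complex>^I\<close> (I a finite index set) are represented as functions
  \<open>'i \<Rightarrow> complex\<close>; only their values on I matter.\<close>

definition cinner :: "'i set \<Rightarrow> ('i \<Rightarrow> complex) \<Rightarrow> ('i \<Rightarrow> complex) \<Rightarrow> complex" where
  "cinner I x y = (\<Sum>i\<in>I. x i * cnj (y i))"

definition is_ETF :: "'i set \<Rightarrow> 'j set \<Rightarrow> ('j \<Rightarrow> 'i \<Rightarrow> complex) \<Rightarrow> bool" where
  "is_ETF I J \<phi> \<longleftrightarrow>
     finite I \<and> finite J \<and>
     (\<forall>j\<in>J. \<exists>i\<in>I. \<phi> j i \<noteq> 0) \<and>
     (\<forall>j\<in>J. \<forall>k\<in>J. cinner I (\<phi> j) (\<phi> j) = cinner I (\<phi> k) (\<phi> k)) \<and>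
     (\<forall>j1\<in>J. \<forall>j2\<in>J. \<forall>k1\<in>J. \<forall>k2\<in>J. j1 \<noteq> j2 \<longrightarrow> k1 \<noteq> k2 \<longrightarrow>
        cmod (cinner I (\<phi> j1) (\<phi> j2)) = cmod (cinner I (\<phi> k1) (\<phi> k2))) \<and>
     (\<exists>c::complex. \<forall>x::'i \<Rightarrow> complex. \<forall>i\<in>I.
        (\<Sum>j\<in>J. cinner I x (\<phi> j) * \<phi> j i) = c * x i)"

definition is_complex_hadamard :: "'r set \<Rightarrow> 'c set \<Rightarrow> ('r \<Rightarrow> 'c \<Rightarrow> complex) \<Rightarrow> bool" where
  "is_complex_hadamard Rows Cols H \<longleftrightarrow>
     finite Rows \<and> finite Cols \<and> card Rows = card Cols \<and>
     (\<forall>r\<in>Rows. \<forall>c\<in>Cols. cmod (H r c) = 1) \<and>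
     (\<forall>r1\<in>Rows. \<forall>r2\<in>Rows.
        (\<Sum>c\<in>Cols. H r1 c * cnj (H r2 c)) = (if r1 = r2 then of_nat (card Cols) else 0))"

text \<open>\<open>{\<phi> c}\<^sub>c\<^sub>\<in>\<^sub>C\<^sub>o\<^sub>l\<^sub>s\<close> is a unimodular simplex in \<open>\<complex>^D\<close> with Naimark complement
  \<open>{a c}\<close>: the matrix with rows indexed by \<open>None\<close> (the deleted row, entries \<open>a c\<close>)
  and \<open>Some d\<close>, \<open>d \<in> D\<close> (entries \<open>\<phi> c d\<close>) is a complex Hadamard matrix.\<close>
definition unimodular_simplex ::
    "'d set \<Rightarrow> 'c set \<Rightarrow> ('c \<Rightarrow> 'd \<Rightarrow> complex) \<Rightarrow> ('c \<Rightarrow> complex) \<Rightarrow> bool" where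
  "unimodular_simplex D Cols \<phi> a \<longleftrightarrow>
     is_complex_hadamard (insert None (Some ` D)) Cols
       (\<lambda>r c. case r of None \<Rightarrow> a c | Some d \<Rightarrow> \<phi> c d)"

definition steiner_triple_system :: "'v set \<Rightarrow> 'v set set \<Rightarrow> bool" where
  "steiner_triple_system Vs Bs \<longleftrightarrow>
     finite Vs \<and> (\<forall>b\<in>Bs. b \<subseteq> Vs \<and> card b = 3) \<and>
     (\<forall>x\<in>Vs. \<forall>y\<in>Vs. x \<noteq> y \<longrightarrow> (\<exists>!b. b \<in> Bs \<and> {x, y} \<subseteq> b))"

text \<open>Embedding operator \<open>E_v : \<complex>^R \<rightarrow> \<complex>^B\<close> determined by the bijection
  \<open>e : {1..R} \<rightarrow> {b \<in> B. v \<in> b}\<close>: it maps \<open>\<delta>_r\<close> to \<open>\<delta>_(e r)\<close>.\<close>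
definition embed_op :: "nat \<Rightarrow> (nat \<Rightarrow> 'b) \<Rightarrow> (nat \<Rightarrow> complex) \<Rightarrow> 'b \<Rightarrow> complex" where
  "embed_op R e x = (\<lambda>b. \<Sum>r\<in>{1..R}. x r * (if e r = b then 1 else 0))"

end

theory Submission
  imports Defs "Jordan_Normal_Form.Determinant"
begin

lemma had_cols:
  assumes H: "is_complex_hadamard Rows Cols H" and c1: "c1 \<in> Cols" and c2: "c2 \<in> Cols"
  shows "(\<Sum>r\<in>Rows. H r c1 * cnj (H r c2)) = (if c1 = c2 then of_nat (card Rows) else 0)"
proof -
  let ?n = "card Rows"
  have fR: "finite Rows" and fC: "finite Cols" and cc: "card Rows = card Cols"
    and orth: "\<And>r1 r2. r1 \<in> Rows \<Longrightarrow> r2 \<in> Rows \<Longrightarrow>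
        (\<Sum>c\<in>Cols. H r1 c * cnj (H r2 c)) = (if r1 = r2 then of_nat (card Cols) else 0)"
    using H unfolding is_complex_hadamard_def by auto
  have n0: "?n \<noteq> 0" using cc c1 fC by auto
  obtain fr where fr: "bij_betw fr {0..<?n} Rows" using ex_bij_betw_nat_finite[OF fR] by blast
  obtain fc where fc: "bij_betw fc {0..<?n} Cols" using ex_bij_betw_nat_finite[OF fC] unfolding cc[symmetric] by blast
  define A where "A = mat ?n ?n (\<lambda>(i,j). H (fr i) (fc j))"
  define B where "B = mat ?n ?n (\<lambda>(i,j). cnj (H (fr j) (fc i)) / of_nat ?n)"
  have A: "A \<in> carrier_mat ?n ?n" and B: "B \<in> carrier_mat ?n ?n" unfolding A_def B_def by auto
  have AB: "A * B = 1\<^sub>m ?n"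
  proof (rule eq_matI)
    fix i j assume i: "i < dim_row (1\<^sub>m ?n)" and j: "j < dim_col (1\<^sub>m ?n)"
    have "(A * B) $$ (i,j) = (\<Sum>k\<in>{0..<?n}. H (fr i) (fc k) * (cnj (H (fr j) (fc k)) / of_nat ?n))"
      using i j unfolding A_def B_def by (simp add: scalar_prod_def)
    also have "\<dots> = (\<Sum>c\<in>Cols. H (fr i) c * cnj (H (fr j) c)) / of_nat ?n"
      unfolding sum.reindex_bij_betw[OF fc, of "\<lambda>c. H (fr i) c * cnj (H (fr j) c)", symmetric]
      by (simp add: sum_divide_distrib)
    also have "\<dots> = (if i = j then 1 else 0)"
    proof -
      have ij: "i < ?n" "j < ?n" using i j by auto
      have "fr i \<in> Rows" "fr j \<in> Rows" using fr ij by (auto simp: bij_betw_def)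
      moreover have "(fr i = fr j) = (i = j)" using fr ij unfolding bij_betw_def inj_on_def by auto
      ultimately show ?thesis using orth[of "fr i" "fr j"] n0 cc by auto
    qed
    finally show "(A * B) $$ (i,j) = 1\<^sub>m ?n $$ (i,j)" using i j by simp
  qed (auto simp: A_def B_def)
  have BA: "B * A = 1\<^sub>m ?n" by (rule mat_mult_left_right_inverse[OF A B AB])
  define i where "i = the_inv_into {0..<?n} fc c2"
  define j where "j = the_inv_into {0..<?n} fc c1"
  have inj: "inj_on fc {0..<?n}" using fc bij_betw_def by blast
  have i: "i < ?n" "fc i = c2" unfolding i_def
    using the_inv_into_into[OF inj, of c2 "{0..<?n}"] f_the_inv_into_f[OF inj, of c2] c2 fc
    by (auto simp: bij_betw_def)
  have j: "j < ?n" "fc j = c1" unfolding j_def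
    using the_inv_into_into[OF inj, of c1 "{0..<?n}"] f_the_inv_into_f[OF inj, of c1] c1 fc
    by (auto simp: bij_betw_def)
  have "(B * A) $$ (i,j) = (\<Sum>k\<in>{0..<?n}. cnj (H (fr k) (fc i)) / of_nat ?n * H (fr k) (fc j))"
    using i j unfolding A_def B_def by (simp add: scalar_prod_def)
  also have "\<dots> = (\<Sum>r\<in>Rows. H r c1 * cnj (H r c2)) / of_nat ?n"
    unfolding sum.reindex_bij_betw[OF fr, of "\<lambda>r. H r c1 * cnj (H r c2)", symmetric]
    using i j by (simp add: sum_divide_distrib mult.commute)
  finally have "(\<Sum>r\<in>Rows. H r c1 * cnj (H r c2)) / of_nat ?n = (if i = j then 1 else 0)"
    using BA i j by simp
  moreover have "(i = j) = (c1 = c2)" using i j inj unfolding inj_on_def by auto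
  ultimately show ?thesis using n0 by (auto split: if_splits simp: field_simps)
qed

lemma sum_opt: "finite D \<Longrightarrow> (\<Sum>r\<in>insert None (Some ` D). f r) = f None + (\<Sum>d\<in>D. f (Some d))"
  by (subst sum.insert) (auto simp: sum.reindex)

context
  fixes D :: "'d set" and C :: "'c set" and \<phi> :: "'c \<Rightarrow> 'd \<Rightarrow> complex" and a :: "'c \<Rightarrow> complex"
  assumes us: "unimodular_simplex D C \<phi> a"
begin

private lemma H: "is_complex_hadamard (insert None (Some ` D)) C (\<lambda>r c. case r of None \<Rightarrow> a c | Some d \<Rightarrow> \<phi> c d)"
  using us by (simp add: unimodular_simplex_def)

lemma us_finC: "finite C" using H by (simp add: is_complex_hadamard_def)
lemma us_finD: "finite D"
proof -
  have "finite (Some ` D)" using H by (simp add: is_complex_hadamard_def)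
  thus ?thesis by (rule finite_imageD) auto
qed

lemma us_card: "card C = card D + 1"
proof -
  have "card (insert None (Some ` D)) = card D + 1"
    using us_finD by (simp add: card_image)
  thus ?thesis using H by (simp add: is_complex_hadamard_def)
qed

lemma us_a: "c \<in> C \<Longrightarrow> cmod (a c) = 1"
  using H unfolding is_complex_hadamard_def by force

lemma us_phi: "c \<in> C \<Longrightarrow> d \<in> D \<Longrightarrow> cmod (\<phi> c d) = 1"
  using H unfolding is_complex_hadamard_def by force

lemma us_row: "d1 \<in> D \<Longrightarrow> d2 \<in> D \<Longrightarrow>
   (\<Sum>c\<in>C. \<phi> c d1 * cnj (\<phi> c d2)) = (if d1 = d2 then of_nat (card C) else 0)"
  using H unfolding is_complex_hadamard_def
  by (drule_tac conjunct2, drule_tac conjunct2, drule_tac conjunct2, drule_tac conjunct2)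
     (drule bspec[of _ _ "Some d1"], simp, drule bspec[of _ _ "Some d2"], auto)

lemma us_rowa: "d \<in> D \<Longrightarrow> (\<Sum>c\<in>C. a c * cnj (\<phi> c d)) = 0"
  using H unfolding is_complex_hadamard_def
  by (drule_tac conjunct2, drule_tac conjunct2, drule_tac conjunct2, drule_tac conjunct2)
     (drule bspec[of _ _ "None"], simp, drule bspec[of _ _ "Some d"], auto)

lemma us_col: "c1 \<in> C \<Longrightarrow> c2 \<in> C \<Longrightarrow>
   a c1 * cnj (a c2) + (\<Sum>d\<in>D. \<phi> c1 d * cnj (\<phi> c2 d)) = (if c1 = c2 then of_nat (card C) else 0)"
proof -
  assume c: "c1 \<in> C" "c2 \<in> C"
  have "card (insert None (Some ` D)) = card C" using H by (simp add: is_complex_hadamard_def)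
  with had_cols[OF H c]
  have "(\<Sum>r\<in>insert None (Some ` D). (case r of None \<Rightarrow> a c1 | Some d \<Rightarrow> \<phi> c1 d) *
          cnj (case r of None \<Rightarrow> a c2 | Some d \<Rightarrow> \<phi> c2 d)) = (if c1 = c2 then of_nat (card C) else 0)"
    by simp
  thus ?thesis by (simp only: sum_opt[OF us_finD] option.case)
qed

end


locale stf =
  fixes Vs :: "'v set" and Bs :: "'v set set" and R :: nat
    and E :: "'v \<Rightarrow> nat \<Rightarrow> 'v set"
    and \<phi> :: "nat \<Rightarrow> nat \<Rightarrow> complex" and a :: "nat \<Rightarrow> complex"
    and \<psi> :: "nat \<Rightarrow> 'v \<Rightarrow> complex" and b :: "nat \<Rightarrow> complex"
  assumes sts: "steiner_triple_system Vs Bs"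
    and rep: "\<forall>v\<in>Vs. card {B\<in>Bs. v \<in> B} = R"
    and emb: "\<forall>v\<in>Vs. bij_betw (E v) {1..R} {B\<in>Bs. v \<in> B}"
    and simp1: "unimodular_simplex {1..R} {1..R+1} \<phi> a"
    and simp2: "unimodular_simplex Vs {1..card Vs + 1} \<psi> b"
begin

lemma finV: "finite Vs" using sts by (simp add: steiner_triple_system_def)
lemma blk: "B \<in> Bs \<Longrightarrow> B \<subseteq> Vs \<and> card B = 3" using sts by (simp add: steiner_triple_system_def)
lemma finB: "finite Bs"
proof -
  have "Bs \<subseteq> Pow Vs" using blk by auto
  thus ?thesis by (rule finite_subset) (simp add: finV)
qed
lemma uniq: "x \<in> Vs \<Longrightarrow> y \<in> Vs \<Longrightarrow> x \<noteq> y \<Longrightarrow> \<exists>!B. B \<in> Bs \<and> {x, y} \<subseteq> B"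
  using sts by (simp add: steiner_triple_system_def)

definition \<iota> :: "'v \<Rightarrow> 'v set \<Rightarrow> nat" where "\<iota> v B = the_inv_into {1..R} (E v) B"

lemma injE: "v \<in> Vs \<Longrightarrow> inj_on (E v) {1..R}" using emb bij_betw_def by blast

lemma Eimg: "v \<in> Vs \<Longrightarrow> E v ` {1..R} = {B\<in>Bs. v \<in> B}"
  using emb by (simp add: bij_betw_def)

lemma \<iota>_in: "v \<in> Vs \<Longrightarrow> B \<in> Bs \<Longrightarrow> v \<in> B \<Longrightarrow> \<iota> v B \<in> {1..R} \<and> E v (\<iota> v B) = B"
proof -
  assume v: "v \<in> Vs" and B: "B \<in> Bs" "v \<in> B"
  have "B \<in> E v ` {1..R}" unfolding Eimg[OF v] using B by simp
  note Bi = this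
  have "\<iota> v B \<in> {1..R}" unfolding \<iota>_def by (rule the_inv_into_into[OF injE[OF v] Bi order_refl])
  moreover have "E v (\<iota> v B) = B" unfolding \<iota>_def by (rule f_the_inv_into_f[OF injE[OF v] Bi])
  ultimately show ?thesis by simp
qed

lemma E_in: "v \<in> Vs \<Longrightarrow> r \<in> {1..R} \<Longrightarrow> E v r \<in> Bs \<and> v \<in> E v r \<and> \<iota> v (E v r) = r"
proof -
  assume v: "v \<in> Vs" and r: "r \<in> {1..R}"
  have "E v r \<in> E v ` {1..R}" using r by (rule imageI)
  hence "E v r \<in> {B\<in>Bs. v \<in> B}" unfolding Eimg[OF v] .
  thus ?thesis unfolding \<iota>_def using the_inv_into_f_f[OF injE[OF v] r] by auto
qed

lemma emb_val: assumes v: "v \<in> Vs" and B: "B \<in> Bs"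
  shows "embed_op R (E v) x B = (if v \<in> B then x (\<iota> v B) else 0)"
proof -
  have "embed_op R (E v) x B = (\<Sum>r\<in>{1..R}. if r = \<iota> v B \<and> v \<in> B then x r else 0)"
    unfolding embed_op_def
  proof (rule sum.cong)
    fix r assume r: "r \<in> {1..R}"
    have "(E v r = B) = (r = \<iota> v B \<and> v \<in> B)"
      using E_in[OF v r] \<iota>_in[OF v B] by auto
    thus "x r * (if E v r = B then 1 else 0) = (if r = \<iota> v B \<and> v \<in> B then x r else 0)" by simp
  qed simp
  also have "\<dots> = (if v \<in> B then x (\<iota> v B) else 0)"
    using \<iota>_in[OF v B] by (auto simp: sum.delta)
  finally show ?thesis .
qed

lemma bsum_same: assumes v: "v \<in> Vs"
  shows "(\<Sum>B\<in>Bs. if v \<in> B then g (\<iota> v B) else 0) = (\<Sum>r\<in>{1..R}. g r)"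
proof -
  have "(\<Sum>B\<in>Bs. if v \<in> B then g (\<iota> v B) else 0) = (\<Sum>B\<in>{B\<in>Bs. v \<in> B}. g (\<iota> v B))"
    using finB by (simp add: sum.inter_filter)
  also have "\<dots> = (\<Sum>r\<in>{1..R}. g (\<iota> v (E v r)))"
    using sum.reindex_bij_betw[of "E v" "{1..R}" "{B\<in>Bs. v \<in> B}" "\<lambda>B. g (\<iota> v B)"] emb v by simp
  also have "\<dots> = (\<Sum>r\<in>{1..R}. g r)" using E_in[OF v] by simp
  finally show ?thesis .
qed

lemma bsum_diff: assumes v: "v \<in> Vs" "w \<in> Vs" "v \<noteq> w"
  obtains B0 where "B0 \<in> Bs" "v \<in> B0" "w \<in> B0"
    "\<And>h::'v set \<Rightarrow> complex. (\<Sum>B\<in>Bs. if v \<in> B \<and> w \<in> B then h B else 0) = h B0"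
proof -
  obtain B0 where B0: "B0 \<in> Bs" "{v, w} \<subseteq> B0" and u: "\<And>B. B \<in> Bs \<Longrightarrow> {v, w} \<subseteq> B \<Longrightarrow> B = B0"
    using uniq[OF v] by (elim ex1E) blast
  have "\<And>h::'v set \<Rightarrow> complex. (\<Sum>B\<in>Bs. if v \<in> B \<and> w \<in> B then h B else 0) = h B0"
  proof -
    fix h :: "'v set \<Rightarrow> complex"
    have "(\<Sum>B\<in>Bs. if v \<in> B \<and> w \<in> B then h B else 0) = (\<Sum>B\<in>Bs. if B = B0 then h B else 0)"
    proof (rule sum.cong)
      fix B assume "B \<in> Bs"
      hence "(v \<in> B \<and> w \<in> B) = (B = B0)" using B0 u[of B] by blast
      thus "(if v \<in> B \<and> w \<in> B then h B else 0) = (if B = B0 then h B else 0)" by simp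
    qed simp
    thus "(\<Sum>B\<in>Bs. if v \<in> B \<and> w \<in> B then h B else 0) = h B0" using B0 finB by (simp add: sum.delta)
  qed
  thus ?thesis using that B0 by auto
qed

lemma VR: assumes v: "v \<in> Vs" shows "card Vs = 2 * R + 1"
proof -
  let ?Bv = "{B\<in>Bs. v \<in> B}"
  have fin: "finite ?Bv" using finB by simp
  have U: "Vs - {v} = (\<Union>B\<in>?Bv. B - {v})"
  proof
    show "Vs - {v} \<subseteq> (\<Union>B\<in>?Bv. B - {v})"
    proof
      fix w assume w: "w \<in> Vs - {v}"
      then obtain B where "B \<in> Bs" "{v, w} \<subseteq> B" using uniq[OF v, of w] by auto
      thus "w \<in> (\<Union>B\<in>?Bv. B - {v})" using w by auto
    qed
    show "(\<Union>B\<in>?Bv. B - {v}) \<subseteq> Vs - {v}" using blk by auto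
  qed
  have "card (Vs - {v}) = (\<Sum>B\<in>?Bv. card (B - {v}))"
    unfolding U
  proof (rule card_UN_disjoint[OF fin])
    show "\<forall>B\<in>?Bv. finite (B - {v})" using blk finV finite_subset by blast
    show "\<forall>B1\<in>?Bv. \<forall>B2\<in>?Bv. B1 \<noteq> B2 \<longrightarrow> (B1 - {v}) \<inter> (B2 - {v}) = {}"
    proof (intro ballI impI)
      fix B1 B2 assume B1: "B1 \<in> ?Bv" and B2: "B2 \<in> ?Bv" and ne: "B1 \<noteq> B2"
      show "(B1 - {v}) \<inter> (B2 - {v}) = {}"
      proof (rule ccontr)
        assume "(B1 - {v}) \<inter> (B2 - {v}) \<noteq> {}"
        then obtain w where w: "w \<in> B1" "w \<in> B2" "w \<noteq> v" by auto
        have "w \<in> Vs" using w B1 blk by auto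
        from uniq[OF v this] w B1 B2 ne show False by auto
      qed
    qed
  qed
  also have "\<dots> = (\<Sum>B\<in>?Bv. 2)"
  proof (rule sum.cong)
    fix B assume B: "B \<in> ?Bv"
    have "finite B" using blk B finV finite_subset by blast
    thus "card (B - {v}) = 2" using blk[of B] B by (simp add: card_Diff_singleton)
  qed simp
  also have "\<dots> = 2 * R" using rep v by simp
  finally have "card Vs - 1 = 2 * R" using v finV by (simp add: card_Diff_singleton)
  moreover have "card Vs > 0" using v finV card_gt_0_iff by blast
  ultimately show ?thesis by linarith
qed

end


lemma cmod1_cnj: "cmod z = 1 \<Longrightarrow> cnj z * z = 1"
  by (metis complex_norm_square mult.commute of_real_1 power_one)
lemma cmod1_cnj': "cmod z = 1 \<Longrightarrow> z * cnj z = 1"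
  by (metis complex_norm_square of_real_1 power_one)

lemma sq2: "complex_of_real (sqrt 2) * complex_of_real (sqrt 2) = 2"
  by (simp flip: of_real_mult)
lemma sqh: "complex_of_real (sqrt (1/2)) * complex_of_real (sqrt (1/2)) = 1/2"
  by (simp flip: of_real_mult)
lemma sq32: "complex_of_real (sqrt (3/2)) * complex_of_real (sqrt (3/2)) = 3/2"
  by (simp flip: of_real_mult)
lemma sq2h: "complex_of_real (sqrt 2) * complex_of_real (sqrt (1/2)) = 1"
proof -
  have "sqrt 2 * sqrt (1/2) = 1" by (simp flip: real_sqrt_mult)
  thus ?thesis by (metis of_real_1 of_real_mult)
qed

context stf begin

definition II :: "('v set + ('v + unit)) set" where
  "II = Inl ` Bs \<union> Inr ` Inl ` Vs \<union> {Inr (Inr ())}"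
definition JJ :: "((nat \<times> 'v) + nat) set" where
  "JJ = Inl ` ({1..R+1} \<times> Vs) \<union> Inr ` {1..card Vs + 1}"
definition F :: "((nat \<times> 'v) + nat) \<Rightarrow> ('v set + ('v + unit)) \<Rightarrow> complex" where
  "F = (\<lambda>j i. case j of
        Inl (s, v) \<Rightarrow> (case i of
            Inl B \<Rightarrow> embed_op R (E v) (\<phi> s) B
          | Inr (Inl w) \<Rightarrow> complex_of_real (sqrt 2) * a s * (if w = v then 1 else 0)
          | Inr (Inr _) \<Rightarrow> 0)
      | Inr t \<Rightarrow> (case i of
            Inl B \<Rightarrow> 0
          | Inr (Inl w) \<Rightarrow> complex_of_real (sqrt (1/2)) * \<psi> t w
          | Inr (Inr _) \<Rightarrow> complex_of_real (sqrt (3/2)) * b t))"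

lemma F_simps[simp]:
  "F (Inl (s,v)) (Inl B) = embed_op R (E v) (\<phi> s) B"
  "F (Inl (s,v)) (Inr (Inl w)) = (if w = v then complex_of_real (sqrt 2) * a s else 0)"
  "F (Inl (s,v)) (Inr (Inr u)) = 0"
  "F (Inr t) (Inl B) = 0"
  "F (Inr t) (Inr (Inl w)) = complex_of_real (sqrt (1/2)) * \<psi> t w"
  "F (Inr t) (Inr (Inr u)) = complex_of_real (sqrt (3/2)) * b t"
  by (simp_all add: F_def)

lemma finII: "finite II" unfolding II_def using finB finV by simp
lemma finJJ: "finite JJ" unfolding JJ_def using finV by simp

lemma sumI: "(\<Sum>i\<in>II. f i) = (\<Sum>B\<in>Bs. f (Inl B)) + (\<Sum>w\<in>Vs. f (Inr (Inl w))) + f (Inr (Inr ()))"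
proof -
  have e: "II = insert (Inr (Inr ())) (Inl ` Bs \<union> Inr ` Inl ` Vs)" unfolding II_def by auto
  have "(\<Sum>i\<in>II. f i) = f (Inr (Inr ())) + (\<Sum>i\<in>Inl ` Bs \<union> Inr ` Inl ` Vs. f i)"
    unfolding e by (subst sum.insert) (auto simp: finB finV)
  also have "(\<Sum>i\<in>Inl ` Bs \<union> Inr ` Inl ` Vs. f i) = (\<Sum>i\<in>Inl ` Bs. f i) + (\<Sum>i\<in>Inr ` Inl ` Vs. f i)"
    by (rule sum.union_disjoint) (auto simp: finB finV)
  also have "(\<Sum>i\<in>Inl ` Bs. f i) = (\<Sum>B\<in>Bs. f (Inl B))" by (simp add: sum.reindex)
  also have "(\<Sum>i\<in>Inr ` Inl ` Vs. f i) = (\<Sum>w\<in>Vs. f (Inr (Inl w)))"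
    by (simp add: sum.reindex inj_on_def image_image)
  finally show ?thesis by (simp add: algebra_simps)
qed

lemma sumJ: "(\<Sum>j\<in>JJ. f j) = (\<Sum>s\<in>{1..R+1}. \<Sum>v\<in>Vs. f (Inl (s, v))) + (\<Sum>t\<in>{1..card Vs + 1}. f (Inr t))"
proof -
  have "(\<Sum>j\<in>JJ. f j) = (\<Sum>j\<in>Inl ` ({1..R+1} \<times> Vs). f j) + (\<Sum>j\<in>Inr ` {1..card Vs + 1}. f j)"
    unfolding JJ_def by (rule sum.union_disjoint) (auto simp: finV)
  also have "(\<Sum>j\<in>Inl ` ({1..R+1} \<times> Vs). f j) = (\<Sum>p\<in>{1..R+1} \<times> Vs. f (Inl p))"
    by (simp add: sum.reindex)
  also have "\<dots> = (\<Sum>s\<in>{1..R+1}. \<Sum>v\<in>Vs. f (Inl (s, v)))"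
    by (rule sum.cartesian_product')
  also have "(\<Sum>j\<in>Inr ` {1..card Vs + 1}. f j) = (\<Sum>t\<in>{1..card Vs + 1}. f (Inr t))"
    by (simp add: sum.reindex)
  finally show ?thesis .
qed

lemma cinnerI: "cinner II x y = (\<Sum>B\<in>Bs. x (Inl B) * cnj (y (Inl B)))
   + (\<Sum>w\<in>Vs. x (Inr (Inl w)) * cnj (y (Inr (Inl w)))) + x (Inr (Inr ())) * cnj (y (Inr (Inr ())))"
  unfolding cinner_def by (rule sumI)

end

context stf begin

lemma G_BB: assumes B1: "B1 \<in> Bs" and B2: "B2 \<in> Bs"
  shows "(\<Sum>j\<in>JJ. cnj (F j (Inl B1)) * F j (Inl B2)) = (if B1 = B2 then of_nat (3*(R+1)) else 0)"
proof -
  have step: "(\<Sum>s\<in>{1..R+1}. cnj (embed_op R (E v) (\<phi> s) B1) * embed_op R (E v) (\<phi> s) B2)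
      = (if v \<in> B1 \<and> B1 = B2 then of_nat (R+1) else 0)" if v: "v \<in> Vs" for v
  proof (cases "v \<in> B1 \<and> v \<in> B2")
    case True
    have i1: "\<iota> v B1 \<in> {1..R}" "E v (\<iota> v B1) = B1" using \<iota>_in[OF v B1] True by auto
    have i2: "\<iota> v B2 \<in> {1..R}" "E v (\<iota> v B2) = B2" using \<iota>_in[OF v B2] True by auto
    have eq: "(\<iota> v B2 = \<iota> v B1) = (B1 = B2)" using i1 i2 by metis
    have "(\<Sum>s\<in>{1..R+1}. cnj (embed_op R (E v) (\<phi> s) B1) * embed_op R (E v) (\<phi> s) B2)
        = (\<Sum>s\<in>{1..R+1}. \<phi> s (\<iota> v B2) * cnj (\<phi> s (\<iota> v B1)))"
      using True by (simp add: emb_val[OF v B1] emb_val[OF v B2] mult.commute)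
    also have "\<dots> = (if \<iota> v B2 = \<iota> v B1 then of_nat (R+1) else 0)"
      using us_row[OF simp1 i2(1) i1(1)] by simp
    finally show ?thesis using eq True by simp
  next
    case False
    thus ?thesis by (auto simp: emb_val[OF v B1] emb_val[OF v B2])
  qed
  have "(\<Sum>j\<in>JJ. cnj (F j (Inl B1)) * F j (Inl B2))
      = (\<Sum>s\<in>{1..R+1}. \<Sum>v\<in>Vs. cnj (embed_op R (E v) (\<phi> s) B1) * embed_op R (E v) (\<phi> s) B2)"
    by (simp add: sumJ)
  also have "\<dots> = (\<Sum>v\<in>Vs. \<Sum>s\<in>{1..R+1}. cnj (embed_op R (E v) (\<phi> s) B1) * embed_op R (E v) (\<phi> s) B2)"
    by (rule sum.swap)
  also have "\<dots> = (\<Sum>v\<in>Vs. if v \<in> B1 \<and> B1 = B2 then of_nat (R+1) else 0)"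
    using step by simp
  also have "\<dots> = (if B1 = B2 then of_nat (3*(R+1)) else 0)"
  proof (cases "B1 = B2")
    case True
    have "(\<Sum>v\<in>Vs. if v \<in> B1 \<and> B1 = B2 then (of_nat (R+1)::complex) else 0)
        = (\<Sum>v\<in>{v\<in>Vs. v \<in> B1}. of_nat (R+1))"
      using True finV sum.inter_filter[of Vs "\<lambda>_. of_nat (R+1)::complex" "\<lambda>v. v \<in> B1"] by simp
    also have "{v\<in>Vs. v \<in> B1} = B1" using blk[OF B1] by auto
    finally show ?thesis using True blk[OF B1] by simp
  qed simp
  finally show ?thesis .
qed

lemma G_BW: assumes B: "B \<in> Bs" and w: "w \<in> Vs"
  shows "(\<Sum>j\<in>JJ. cnj (F j (Inl B)) * F j (Inr (Inl w))) = 0"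
proof -
  have "(\<Sum>j\<in>JJ. cnj (F j (Inl B)) * F j (Inr (Inl w)))
      = (\<Sum>s\<in>{1..R+1}. \<Sum>v\<in>Vs. cnj (embed_op R (E v) (\<phi> s) B) * (if w = v then complex_of_real (sqrt 2) * a s else 0))"
    by (simp add: sumJ)
  also have "\<dots> = (\<Sum>s\<in>{1..R+1}. cnj (embed_op R (E w) (\<phi> s) B) * (complex_of_real (sqrt 2) * a s))"
    using w finV by (simp add: if_distrib[of "\<lambda>x. _ * x"] sum.delta cong: if_cong)
  also have "\<dots> = 0"
  proof (cases "w \<in> B")
    case True
    have i: "\<iota> w B \<in> {1..R}" using \<iota>_in[OF w B] True by auto
    have "(\<Sum>s\<in>{1..R+1}. cnj (embed_op R (E w) (\<phi> s) B) * (complex_of_real (sqrt 2) * a s))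
       = complex_of_real (sqrt 2) * (\<Sum>s\<in>{1..R+1}. a s * cnj (\<phi> s (\<iota> w B)))"
      using True by (simp add: emb_val[OF w B] sum_distrib_left algebra_simps)
    thus ?thesis using us_rowa[OF simp1 i] by simp
  next
    case False thus ?thesis by (simp add: emb_val[OF w B])
  qed
  finally show ?thesis .
qed

lemma G_WB: assumes B: "B \<in> Bs" and w: "w \<in> Vs"
  shows "(\<Sum>j\<in>JJ. cnj (F j (Inr (Inl w))) * F j (Inl B)) = 0"
proof -
  have "(\<Sum>j\<in>JJ. cnj (F j (Inr (Inl w))) * F j (Inl B)) = cnj (\<Sum>j\<in>JJ. cnj (F j (Inl B)) * F j (Inr (Inl w)))"
    unfolding cnj_sum by (rule sum.cong) (simp_all add: mult.commute)
  thus ?thesis using G_BW[OF B w] by simp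
qed

lemma G_WW: assumes w1: "w1 \<in> Vs" and w2: "w2 \<in> Vs"
  shows "(\<Sum>j\<in>JJ. cnj (F j (Inr (Inl w1))) * F j (Inr (Inl w2)))
     = (if w1 = w2 then of_nat (2*(R+1)) + (of_nat (card Vs) + 1) / 2 else 0)"
proof -
  have "(\<Sum>j\<in>JJ. cnj (F j (Inr (Inl w1))) * F j (Inr (Inl w2)))
     = (\<Sum>s\<in>{1..R+1}. \<Sum>v\<in>Vs. cnj (if w1 = v then complex_of_real (sqrt 2) * a s else 0) * (if w2 = v then complex_of_real (sqrt 2) * a s else 0))
       + (\<Sum>t\<in>{1..card Vs + 1}. cnj (complex_of_real (sqrt (1/2)) * \<psi> t w1) * (complex_of_real (sqrt (1/2)) * \<psi> t w2))"
    by (simp add: sumJ)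
  also have "(\<Sum>s\<in>{1..R+1}. \<Sum>v\<in>Vs. cnj (if w1 = v then complex_of_real (sqrt 2) * a s else 0) * (if w2 = v then complex_of_real (sqrt 2) * a s else 0))
      = (\<Sum>s\<in>{1..R+1}. if w1 = w2 then 2 else 0)"
  proof (rule sum.cong)
    fix s assume s: "s \<in> {1..R+1}"
    have "(\<Sum>v\<in>Vs. cnj (if w1 = v then complex_of_real (sqrt 2) * a s else 0) * (if w2 = v then complex_of_real (sqrt 2) * a s else 0))
       = (\<Sum>v\<in>Vs. if v = w1 then (if w1 = w2 then 2 else 0) else 0)"
      using cmod1_cnj[OF us_a[OF simp1 s]] sq2
      by (intro sum.cong) (auto simp: algebra_simps)
    also have "\<dots> = (if w1 = w2 then 2 else 0)" using w1 finV by simp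
    finally show "(\<Sum>v\<in>Vs. cnj (if w1 = v then complex_of_real (sqrt 2) * a s else 0) * (if w2 = v then complex_of_real (sqrt 2) * a s else 0))
       = (if w1 = w2 then 2 else 0)" .
  qed simp
  also have "(\<Sum>t\<in>{1..card Vs + 1}. cnj (complex_of_real (sqrt (1/2)) * \<psi> t w1) * (complex_of_real (sqrt (1/2)) * \<psi> t w2))
      = 1/2 * (\<Sum>t\<in>{1..card Vs + 1}. \<psi> t w2 * cnj (\<psi> t w1))"
    by (simp add: sum_distrib_left algebra_simps sqh flip: of_real_mult)
  also have "\<dots> = (if w1 = w2 then (of_nat (card Vs) + 1) / 2 else 0)"
    using us_row[OF simp2 w2 w1] by auto
  finally show ?thesis by (cases "w1 = w2") (simp_all add: algebra_simps)
qed

end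

context stf begin

lemma G_WL: assumes w: "w \<in> Vs"
  shows "(\<Sum>j\<in>JJ. cnj (F j (Inr (Inl w))) * F j (Inr (Inr ()))) = 0"
proof -
  have "(\<Sum>j\<in>JJ. cnj (F j (Inr (Inl w))) * F j (Inr (Inr ())))
     = (\<Sum>t\<in>{1..card Vs + 1}. cnj (complex_of_real (sqrt (1/2)) * \<psi> t w) * (complex_of_real (sqrt (3/2)) * b t))"
    by (simp add: sumJ)
  also have "\<dots> = complex_of_real (sqrt (1/2)) * complex_of_real (sqrt (3/2)) * (\<Sum>t\<in>{1..card Vs + 1}. b t * cnj (\<psi> t w))"
    by (simp add: sum_distrib_left algebra_simps)
  also have "\<dots> = 0" using us_rowa[OF simp2 w] by simp
  finally show ?thesis .
qed

lemma G_LW: assumes w: "w \<in> Vs"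
  shows "(\<Sum>j\<in>JJ. cnj (F j (Inr (Inr ()))) * F j (Inr (Inl w))) = 0"
proof -
  have "(\<Sum>j\<in>JJ. cnj (F j (Inr (Inr ()))) * F j (Inr (Inl w))) = cnj (\<Sum>j\<in>JJ. cnj (F j (Inr (Inl w))) * F j (Inr (Inr ())))"
    unfolding cnj_sum by (rule sum.cong) (simp_all add: mult.commute)
  thus ?thesis using G_WL[OF w] by simp
qed

lemma G_LL: "(\<Sum>j\<in>JJ. cnj (F j (Inr (Inr ()))) * F j (Inr (Inr ()))) = 3 / 2 * (of_nat (card Vs) + 1)"
proof -
  have "(\<Sum>j\<in>JJ. cnj (F j (Inr (Inr ()))) * F j (Inr (Inr ())))
     = (\<Sum>t\<in>{1..card Vs + 1}. cnj (complex_of_real (sqrt (3/2)) * b t) * (complex_of_real (sqrt (3/2)) * b t))"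
    by (simp add: sumJ)
  also have "\<dots> = (\<Sum>t\<in>{1..card Vs + 1}. 3/2)"
  proof (rule sum.cong)
    fix t assume t: "t \<in> {1..card Vs + 1}"
    have "cnj (complex_of_real (sqrt (3/2)) * b t) * (complex_of_real (sqrt (3/2)) * b t)
       = (complex_of_real (sqrt (3/2)) * complex_of_real (sqrt (3/2))) * (cnj (b t) * b t)"
      by (simp add: algebra_simps)
    thus "cnj (complex_of_real (sqrt (3/2)) * b t) * (complex_of_real (sqrt (3/2)) * b t) = 3/2"
      using cmod1_cnj[OF us_a[OF simp2 t]] sq32 by simp
  qed simp
  also have "\<dots> = 3 / 2 * (of_nat (card Vs) + 1)" by simp
  finally show ?thesis .
qed

lemma G_BL: "B \<in> Bs \<Longrightarrow> (\<Sum>j\<in>JJ. cnj (F j (Inl B)) * F j (Inr (Inr ()))) = 0"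
  by (simp add: sumJ)
lemma G_LB: "B \<in> Bs \<Longrightarrow> (\<Sum>j\<in>JJ. cnj (F j (Inr (Inr ()))) * F j (Inl B)) = 0"
  by (simp add: sumJ)

definition c0 :: complex where "c0 = 3 / 2 * (of_nat (card Vs) + 1)"

lemma VRc: "v \<in> Vs \<Longrightarrow> (of_nat (card Vs) :: complex) = 2 * of_nat R + 1"
  using VR by simp

lemma Gram: assumes k: "k \<in> II" and i: "i \<in> II"
  shows "(\<Sum>j\<in>JJ. cnj (F j k) * F j i) = (if k = i then c0 else 0)"
proof (cases "Vs = {}")
  case True
  hence "Bs = {}" using blk by fastforce
  hence "k = Inr (Inr ())" "i = Inr (Inr ())" using k i True unfolding II_def by auto
  thus ?thesis using G_LL by (simp add: c0_def)
next
  case False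
  then obtain v where v: "v \<in> Vs" by auto
  have cB: "of_nat (3*(R+1)) = c0"
    unfolding c0_def using VRc[OF v] by (simp add: algebra_simps)
  have cW: "of_nat (2*(R+1)) + (of_nat (card Vs) + 1) / 2 = c0"
    unfolding c0_def using VRc[OF v] by (simp add: field_simps)
  have kc: "(\<exists>B\<in>Bs. k = Inl B) \<or> (\<exists>w\<in>Vs. k = Inr (Inl w)) \<or> k = Inr (Inr ())"
    using k unfolding II_def by auto
  have ic: "(\<exists>B\<in>Bs. i = Inl B) \<or> (\<exists>w\<in>Vs. i = Inr (Inl w)) \<or> i = Inr (Inr ())"
    using i unfolding II_def by auto
  from kc ic show ?thesis
    by (elim disjE bexE)
       (simp_all only: G_BB G_BW G_WB G_WW G_WL G_LW G_LL G_BL G_LB cB cW c0_def[symmetric]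
          sum.inject old.sum.inject sum.distinct if_True if_False simp_thms)
qed

lemma frame: "(\<Sum>j\<in>JJ. cinner II x (F j) * F j i) = c0 * x i" if i: "i \<in> II"
proof -
  have "(\<Sum>j\<in>JJ. cinner II x (F j) * F j i) = (\<Sum>j\<in>JJ. \<Sum>k\<in>II. x k * (cnj (F j k) * F j i))"
    unfolding cinner_def by (intro sum.cong refl) (simp add: sum_distrib_right mult.assoc)
  also have "\<dots> = (\<Sum>k\<in>II. x k * (\<Sum>j\<in>JJ. cnj (F j k) * F j i))"
    by (subst sum.swap) (simp add: sum_distrib_left)
  also have "\<dots> = (\<Sum>k\<in>II. if k = i then x k * c0 else 0)"
    using Gram[OF _ i] by (intro sum.cong) auto
  also have "\<dots> = c0 * x i" using i finII by (simp add: sum.delta' mult.commute)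
  finally show ?thesis .
qed

end


lemma cinner_sym: "cinner I y x = cnj (cinner I x y)"
  unfolding cinner_def cnj_sum by (simp add: mult.commute)

context stf begin

lemma Vpart: "(\<Sum>w\<in>Vs. (if w = v then c * x else 0) * cnj (if w = v' then c * y else 0))
   = (if v = v' \<and> v \<in> Vs then (c * cnj c) * (x * cnj y) else 0)"
proof -
  have "(\<Sum>w\<in>Vs. (if w = v then c * x else 0) * cnj (if w = v' then c * y else 0))
     = (\<Sum>w\<in>Vs. if w = v then (if v = v' then (c * cnj c) * (x * cnj y) else 0) else 0)"
    by (intro sum.cong) (auto simp: algebra_simps)
  also have "\<dots> = (if v = v' \<and> v \<in> Vs then (c * cnj c) * (x * cnj y) else 0)"
    using finV by (simp add: sum.delta)
  finally show ?thesis .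
qed

lemma ip_ff: assumes s: "s \<in> {1..R+1}" "s' \<in> {1..R+1}" and v: "v \<in> Vs" "v' \<in> Vs"
  shows "cinner II (F (Inl (s,v))) (F (Inl (s',v')))
     = (\<Sum>B\<in>Bs. if v \<in> B \<and> v' \<in> B then \<phi> s (\<iota> v B) * cnj (\<phi> s' (\<iota> v' B)) else 0)
       + (if v = v' then 2 * (a s * cnj (a s')) else 0)"
proof -
  have bl: "(\<Sum>B\<in>Bs. embed_op R (E v) (\<phi> s) B * cnj (embed_op R (E v') (\<phi> s') B))
     = (\<Sum>B\<in>Bs. if v \<in> B \<and> v' \<in> B then \<phi> s (\<iota> v B) * cnj (\<phi> s' (\<iota> v' B)) else 0)"
    by (intro sum.cong) (auto simp: emb_val[OF v(1)] emb_val[OF v(2)])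
  have c2: "complex_of_real (sqrt 2) * cnj (complex_of_real (sqrt 2)) = 2" using sq2 by simp
  show ?thesis unfolding cinnerI using v
    by (simp only: F_simps bl Vpart c2) simp
qed

lemma norm_f: assumes s: "s \<in> {1..R+1}" and v: "v \<in> Vs"
  shows "cinner II (F (Inl (s,v))) (F (Inl (s,v))) = (of_nat (card Vs) + 3) / 2"
proof -
  have "(\<Sum>B\<in>Bs. if v \<in> B \<and> v \<in> B then \<phi> s (\<iota> v B) * cnj (\<phi> s (\<iota> v B)) else 0)
      = (\<Sum>r\<in>{1..R}. \<phi> s r * cnj (\<phi> s r))"
    using bsum_same[OF v, of "\<lambda>r. \<phi> s r * cnj (\<phi> s r)"] by simp
  also have "\<dots> = (\<Sum>r\<in>{1..R}. 1)"
    by (intro sum.cong refl) (rule cmod1_cnj'[OF us_phi[OF simp1 s]])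
  finally have "cinner II (F (Inl (s,v))) (F (Inl (s,v))) = of_nat R + 2"
    unfolding ip_ff[OF s s v v] using cmod1_cnj'[OF us_a[OF simp1 s]] by simp
  thus ?thesis using VRc[OF v] by (simp add: field_simps)
qed

lemma ip_ff_same: assumes s: "s \<in> {1..R+1}" "s' \<in> {1..R+1}" "s \<noteq> s'" and v: "v \<in> Vs"
  shows "cmod (cinner II (F (Inl (s,v))) (F (Inl (s',v)))) = 1"
proof -
  have "(\<Sum>B\<in>Bs. if v \<in> B \<and> v \<in> B then \<phi> s (\<iota> v B) * cnj (\<phi> s' (\<iota> v B)) else 0)
      = (\<Sum>r\<in>{1..R}. \<phi> s r * cnj (\<phi> s' r))"
    using bsum_same[OF v, of "\<lambda>r. \<phi> s r * cnj (\<phi> s' r)"] by simp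
  moreover have "a s * cnj (a s') + (\<Sum>r\<in>{1..R}. \<phi> s r * cnj (\<phi> s' r)) = 0"
    using us_col[OF simp1 s(1,2)] s(3) by simp
  ultimately have "cinner II (F (Inl (s,v))) (F (Inl (s',v))) = a s * cnj (a s')"
    unfolding ip_ff[OF s(1,2) v v] by (simp add: algebra_simps eq_neg_iff_add_eq_0)
  thus ?thesis using us_a[OF simp1 s(1)] us_a[OF simp1 s(2)] by (simp add: norm_mult)
qed

lemma ip_ff_diff: assumes s: "s \<in> {1..R+1}" "s' \<in> {1..R+1}" and v: "v \<in> Vs" "v' \<in> Vs" "v \<noteq> v'"
  shows "cmod (cinner II (F (Inl (s,v))) (F (Inl (s',v')))) = 1"
proof -
  obtain B0 where B0: "B0 \<in> Bs" "v \<in> B0" "v' \<in> B0"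
    and h: "\<And>h::'v set \<Rightarrow> complex. (\<Sum>B\<in>Bs. if v \<in> B \<and> v' \<in> B then h B else 0) = h B0"
    by (rule bsum_diff[OF v], blast)
  have "cinner II (F (Inl (s,v))) (F (Inl (s',v'))) = \<phi> s (\<iota> v B0) * cnj (\<phi> s' (\<iota> v' B0))"
    unfolding ip_ff[OF s v(1,2)] using h[of "\<lambda>B. \<phi> s (\<iota> v B) * cnj (\<phi> s' (\<iota> v' B))"] v(3) by simp
  moreover have "\<iota> v B0 \<in> {1..R}" "\<iota> v' B0 \<in> {1..R}" using \<iota>_in[OF v(1) B0(1,2)] \<iota>_in[OF v(2) B0(1,3)] by auto
  ultimately show ?thesis using us_phi[OF simp1 s(1)] us_phi[OF simp1 s(2)] by (simp add: norm_mult)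
qed

lemma ip_fg: assumes s: "s \<in> {1..R+1}" and v: "v \<in> Vs"
  shows "cinner II (F (Inl (s,v))) (F (Inr t)) = a s * cnj (\<psi> t v)"
proof -
  have "(\<Sum>w\<in>Vs. (if w = v then complex_of_real (sqrt 2) * a s else 0) * cnj (complex_of_real (sqrt (1/2)) * \<psi> t w))
     = (\<Sum>w\<in>Vs. if w = v then (complex_of_real (sqrt 2) * complex_of_real (sqrt (1/2))) * (a s * cnj (\<psi> t v)) else 0)"
    by (intro sum.cong) (auto simp: algebra_simps)
  also have "\<dots> = a s * cnj (\<psi> t v)" using v finV sq2h by (simp add: sum.delta)
  finally show ?thesis unfolding cinnerI by simp
qed

lemma ip_gg: "cinner II (F (Inr t)) (F (Inr t'))
   = 1/2 * (\<Sum>w\<in>Vs. \<psi> t w * cnj (\<psi> t' w)) + 3/2 * (b t * cnj (b t'))"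
proof -
  have e1: "(\<Sum>w\<in>Vs. complex_of_real (sqrt (1/2)) * \<psi> t w * cnj (complex_of_real (sqrt (1/2)) * \<psi> t' w))
      = 1/2 * (\<Sum>w\<in>Vs. \<psi> t w * cnj (\<psi> t' w))"
    unfolding sqh[symmetric] by (simp add: sum_distrib_left algebra_simps)
  have e2: "complex_of_real (sqrt (3/2)) * b t * cnj (complex_of_real (sqrt (3/2)) * b t')
      = 3/2 * (b t * cnj (b t'))"
    unfolding sq32[symmetric] by (simp add: algebra_simps)
  show ?thesis unfolding cinnerI F_simps e1 e2 by simp
qed

lemma norm_g: assumes t: "t \<in> {1..card Vs + 1}"
  shows "cinner II (F (Inr t)) (F (Inr t)) = (of_nat (card Vs) + 3) / 2"
proof -
  have "(\<Sum>w\<in>Vs. \<psi> t w * cnj (\<psi> t w)) = (\<Sum>w\<in>Vs. 1)"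
    by (intro sum.cong refl) (rule cmod1_cnj'[OF us_phi[OF simp2 t]])
  thus ?thesis unfolding ip_gg using cmod1_cnj'[OF us_a[OF simp2 t]] by (simp add: field_simps)
qed

lemma ip_gg_diff: assumes t: "t \<in> {1..card Vs + 1}" "t' \<in> {1..card Vs + 1}" "t \<noteq> t'"
  shows "cmod (cinner II (F (Inr t)) (F (Inr t'))) = 1"
proof -
  have "b t * cnj (b t') + (\<Sum>w\<in>Vs. \<psi> t w * cnj (\<psi> t' w)) = 0"
    using us_col[OF simp2 t(1,2)] t(3) by simp
  hence "cinner II (F (Inr t)) (F (Inr t')) = b t * cnj (b t')"
    unfolding ip_gg by (simp add: eq_neg_iff_add_eq_0[symmetric] field_simps)
  thus ?thesis using us_a[OF simp2 t(1)] us_a[OF simp2 t(2)] by (simp add: norm_mult)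
qed

end

context stf begin

lemma nrm: "j \<in> JJ \<Longrightarrow> cinner II (F j) (F j) = (of_nat (card Vs) + 3) / 2"
  unfolding JJ_def using norm_f norm_g by auto

lemma md: assumes j1: "j1 \<in> JJ" and j2: "j2 \<in> JJ" and ne: "j1 \<noteq> j2"
  shows "cmod (cinner II (F j1) (F j2)) = 1"
proof -
  have c1: "(\<exists>s\<in>{1..R+1}. \<exists>v\<in>Vs. j1 = Inl (s,v)) \<or> (\<exists>t\<in>{1..card Vs + 1}. j1 = Inr t)"
    using j1 unfolding JJ_def by auto
  have c2: "(\<exists>s\<in>{1..R+1}. \<exists>v\<in>Vs. j2 = Inl (s,v)) \<or> (\<exists>t\<in>{1..card Vs + 1}. j2 = Inr t)"
    using j2 unfolding JJ_def by auto
  show ?thesis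
  proof (cases rule: disjE[OF c1]; cases rule: disjE[OF c2]; elim bexE)
    fix s v s' v' assume s: "s \<in> {1..R+1}" and v: "v \<in> Vs" and s': "s' \<in> {1..R+1}" and v': "v' \<in> Vs"
      and e: "j1 = Inl (s,v)" "j2 = Inl (s',v')"
    show ?thesis
    proof (cases "v = v'")
      case True
      hence "s \<noteq> s'" using ne e by auto
      thus ?thesis using ip_ff_same[OF s s' _ v] e True by simp
    next
      case False thus ?thesis using ip_ff_diff[OF s s' v v' False] e by simp
    qed
  next
    fix s v t assume s: "s \<in> {1..R+1}" and v: "v \<in> Vs" and t: "t \<in> {1..card Vs + 1}"
      and e: "j1 = Inl (s,v)" "j2 = Inr t"
    show ?thesis using ip_fg[OF s v, of t] e us_a[OF simp1 s] us_phi[OF simp2 t v] by (simp add: norm_mult)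
  next
    fix s v t assume s: "s \<in> {1..R+1}" and v: "v \<in> Vs" and t: "t \<in> {1..card Vs + 1}"
      and e: "j2 = Inl (s,v)" "j1 = Inr t"
    show ?thesis using ip_fg[OF s v, of t] e us_a[OF simp1 s] us_phi[OF simp2 t v] cinner_sym[of II "F j1" "F j2"]
      by (simp add: norm_mult)
  next
    fix t t' assume t: "t \<in> {1..card Vs + 1}" and t': "t' \<in> {1..card Vs + 1}"
      and e: "j1 = Inr t" "j2 = Inr t'"
    hence "t \<noteq> t'" using ne by auto
    thus ?thesis using ip_gg_diff[OF t t'] e by simp
  qed
qed

lemma nz: "j \<in> JJ \<Longrightarrow> \<exists>i\<in>II. F j i \<noteq> 0"
proof -
  assume j: "j \<in> JJ"
  show ?thesis
  proof (cases j)
    case (Inl p)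
    then obtain s v where e: "j = Inl (s,v)" by (cases p) auto
    hence s: "s \<in> {1..R+1}" and v: "v \<in> Vs" using j unfolding JJ_def by auto
    have "a s \<noteq> 0" using us_a[OF simp1 s] by auto
    hence "F j (Inr (Inl v)) \<noteq> 0" using e by simp
    moreover have "Inr (Inl v) \<in> II" using v unfolding II_def by auto
    ultimately show ?thesis by blast
  next
    case (Inr t)
    hence t: "t \<in> {1..card Vs + 1}" using j unfolding JJ_def by auto
    have "b t \<noteq> 0" using us_a[OF simp2 t] by auto
    hence "F j (Inr (Inr ())) \<noteq> 0" using Inr by simp
    moreover have "Inr (Inr ()) \<in> II" unfolding II_def by auto
    ultimately show ?thesis by blast
  qed
qed

lemma ETF: "is_ETF II JJ F"
proof -
  have n2: "\<forall>j\<in>JJ. \<forall>k\<in>JJ. cinner II (F j) (F j) = cinner II (F k) (F k)"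
    using nrm by (intro ballI) (simp only:)
  have m2: "\<forall>j1\<in>JJ. \<forall>j2\<in>JJ. \<forall>k1\<in>JJ. \<forall>k2\<in>JJ. j1 \<noteq> j2 \<longrightarrow> k1 \<noteq> k2 \<longrightarrow>
        cmod (cinner II (F j1) (F j2)) = cmod (cinner II (F k1) (F k2))"
  proof (intro ballI impI)
    fix j1 j2 k1 k2 assume "j1 \<in> JJ" "j2 \<in> JJ" "k1 \<in> JJ" "k2 \<in> JJ" "j1 \<noteq> j2" "k1 \<noteq> k2"
    thus "cmod (cinner II (F j1) (F j2)) = cmod (cinner II (F k1) (F k2))" using md by metis
  qed
  have f2: "\<exists>c::complex. \<forall>x::('v set + ('v + unit)) \<Rightarrow> complex. \<forall>i\<in>II.
        (\<Sum>j\<in>JJ. cinner II x (F j) * F j i) = c * x i"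
    using frame by blast
  show ?thesis unfolding is_ETF_def using finII finJJ nz n2 m2 f2 by blast
qed

end

theorem theorem3p1:
  fixes Vs :: "'v set" and Bs :: "'v set set" and R :: nat
    and E :: "'v \<Rightarrow> nat \<Rightarrow> 'v set"
    and \<phi> :: "nat \<Rightarrow> nat \<Rightarrow> complex" and a :: "nat \<Rightarrow> complex"
    and \<psi> :: "nat \<Rightarrow> 'v \<Rightarrow> complex" and b :: "nat \<Rightarrow> complex"
  assumes sts: "steiner_triple_system Vs Bs"
    and rep: "\<forall>v\<in>Vs. card {B\<in>Bs. v \<in> B} = R"
    and emb: "\<forall>v\<in>Vs. bij_betw (E v) {1..R} {B\<in>Bs. v \<in> B}"
    and simp1: "unimodular_simplex {1..R} {1..R+1} \<phi> a"
    and simp2: "unimodular_simplex Vs {1..card Vs + 1} \<psi> b"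
  shows "is_ETF
     (Inl ` Bs \<union> Inr ` Inl ` Vs \<union> {Inr (Inr ())})
     (Inl ` ({1..R+1} \<times> Vs) \<union> Inr ` {1..card Vs + 1})
     (\<lambda>j i. case j of
        Inl (s, v) \<Rightarrow> (case i of
            Inl B \<Rightarrow> embed_op R (E v) (\<phi> s) B
          | Inr (Inl w) \<Rightarrow> complex_of_real (sqrt 2) * a s * (if w = v then 1 else 0)
          | Inr (Inr _) \<Rightarrow> 0)
      | Inr t \<Rightarrow> (case i of
            Inl B \<Rightarrow> 0
          | Inr (Inl w) \<Rightarrow> complex_of_real (sqrt (1/2)) * \<psi> t w
          | Inr (Inr _) \<Rightarrow> complex_of_real (sqrt (3/2)) * b t))"
proof -
  interpret stf Vs Bs R E \<phi> a \<psi> b using sts rep emb simp1 simp2 by (rule stf.intro)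
  show ?thesis using ETF unfolding II_def JJ_def F_def .
qed


end
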